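(* With $h$ as defined in the context, for every $x\in(-2,\infty)$, \[1<h(x)<\left(\frac{x+3}{x+2}\right)^2.\]
   Context: Let $u_n=(-1)^{s_2(n)}$, where $s_2(n)$ is the sum of the binary digits of the non-negative integer $n$ (Thue–Morse sequence with values $\pm1$). For real $x>-2$ define $h(x)=\prod_{n=1}^\infty\left(\frac{2n+x}{2n+1+x}\right)^{u_n}$ (limit of partial products; it converges). *)

theory Defs
  imports "HOL-Analysis.Analysis"
begin

fun bin_digit_sum :: "nat \<Rightarrow> nat" where
  "bin_digit_sum n = (if n = 0 then 0 else n mod 2 + bin_digit_sum (n div 2))"

definition tm :: "nat \<Rightarrow> int" where
  "tm n = (-1) ^ bin_digit_sum n"

definition h_partial :: "real \<Rightarrow> nat \<Rightarrow> real" where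
  "h_partial x N = (\<Prod>n\<in>{1..N}. ((2 * real n + x) / (2 * real n + 1 + x)) powi tm n)"

definition h :: "real \<Rightarrow> real" where
  "h x = lim (h_partial x)"

end

theory Submission imports Defs begin

lemma bds_even: "bin_digit_sum (2*k) = bin_digit_sum k"
proof (cases "k=0")
  case True then show ?thesis by simp
next
  case False
  then show ?thesis by (subst bin_digit_sum.simps) simp
qed
lemma bds_odd: "bin_digit_sum (2*k+1) = bin_digit_sum k + 1"
  by (subst bin_digit_sum.simps) simp
lemma bds_0: "bin_digit_sum 0 = 0"
  by (subst bin_digit_sum.simps) simp
declare bin_digit_sum.simps [simp del]
lemma tm_even: "tm (2*k) = tm k" unfolding tm_def by (simp only: bds_even)
lemma tm_odd: "tm (2*k+1) = - tm k" unfolding tm_def bds_odd by simp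
lemma tm_abs: "\<bar>real_of_int (tm n)\<bar> = 1" by (simp add: tm_def)
lemma tm_1: "tm (Suc 0) = -1"
  using tm_odd[of 0] by (simp add: tm_def bds_0)

definition cc :: "real \<Rightarrow> nat \<Rightarrow> real" where
  "cc x n = ln ((2*real n+1+x)/(2*real n+x))"
definition ss :: "real \<Rightarrow> nat \<Rightarrow> real" where
  "ss x N = (\<Sum>n\<in>{1..N}. real_of_int (tm n) * cc x n)"

lemma even_odd_lim:
  fixes f :: "nat \<Rightarrow> real"
  assumes e: "(\<lambda>n. f (2*n)) \<longlonglongrightarrow> l" and o: "(\<lambda>n. f (2*n+1)) \<longlonglongrightarrow> l"
  shows "f \<longlonglongrightarrow> l"
proof (rule LIMSEQ_I)
  fix r :: real assume "0 < r"
  from e[THEN LIMSEQ_D, OF this] obtain N1 where N1: "\<And>n. n \<ge> N1 \<Longrightarrow> norm (f (2*n) - l) < r" by auto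
  from o[THEN LIMSEQ_D, OF \<open>0<r\<close>] obtain N2 where N2: "\<And>n. n \<ge> N2 \<Longrightarrow> norm (f (2*n+1) - l) < r" by auto
  have "norm (f n - l) < r" if "n \<ge> 2*N1 + 2*N2" for n
  proof (cases "even n")
    case True
    then obtain k where k: "n = 2*k" by blast
    with that have "k \<ge> N1" by auto
    then show ?thesis using N1 k by auto
  next
    case False
    then obtain k where k: "n = 2*k+1" using oddE by blast
    with that have "k \<ge> N2" by auto
    then show ?thesis using N2 k by auto
  qed
  then show "\<exists>no. \<forall>n\<ge>no. norm (f n - l) < r" by blast
qed

lemma cc_pos:
  assumes "x > -2" "n \<ge> 1" shows "cc x n > 0"
proof -
  have "2*real n + x > 0" using assms by auto
  then show ?thesis unfolding cc_def by (auto simp: divide_simps)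
qed

lemma cc_mono:
  assumes "x > -2" "n \<ge> 1" shows "cc x (Suc n) \<le> cc x n"
proof -
  have a: "2*real n + x > 0" using assms by auto
  have "(2*real n+3+x)/(2*real n+2+x) \<le> (2*real n+1+x)/(2*real n+x)"
    using a by (simp add: divide_simps) (simp add: algebra_simps)
  moreover have "(2*real n+3+x)/(2*real n+2+x) > 0" using a by auto
  ultimately show ?thesis unfolding cc_def
    by (simp add: algebra_simps)
qed

lemma cc_strict:
  assumes "x > -2" shows "cc x 2 < cc x 1"
proof -
  have a: "2 + x > 0" using assms by auto
  have "(5+x)/(4+x) < (3+x)/(2+x)"
    using a by (simp add: divide_simps) (simp add: algebra_simps)
  moreover have "(5+x)/(4+x) > 0" using a by auto
  ultimately show ?thesis unfolding cc_def
    by (simp add: algebra_simps)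
qed

lemma hp_exp:
  assumes "x > -2" shows "h_partial x N = exp (- ss x N)"
proof -
  have "h_partial x N = (\<Prod>n\<in>{1..N}. exp (- (real_of_int (tm n) * cc x n)))"
    unfolding h_partial_def
  proof (rule prod.cong[OF refl])
    fix n assume "n \<in> {1..N}"
    then have a: "2*real n + x > 0" using assms by auto
    then have b: "(2 * real n + x) / (2 * real n + 1 + x) > 0" by auto
    have "((2 * real n + x) / (2 * real n + 1 + x)) powi tm n
        = exp (real_of_int (tm n) * ln ((2 * real n + x) / (2 * real n + 1 + x)))"
      using b exp_power_int[of "ln ((2 * real n + x) / (2 * real n + 1 + x))" "tm n"] by simp
    also have "ln ((2 * real n + x) / (2 * real n + 1 + x)) = - cc x n"
      unfolding cc_def using a by (simp add: ln_div)
    finally show "((2 * real n + x) / (2 * real n + 1 + x)) powi tm n = exp (- (real_of_int (tm n) * cc x n))"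
      by simp
  qed
  also have "\<dots> = exp (- ss x N)"
    unfolding ss_def by (simp add: exp_sum[symmetric] sum_negf)
  finally show ?thesis .
qed

lemma ss_odd:
  "ss x (2*M+1) = - cc x 1 + (\<Sum>m<M. real_of_int (tm (m+1)) * (cc x (2*m+2) - cc x (2*m+3)))"
proof (induction M)
  case 0
  then show ?case by (simp add: ss_def tm_1)
next
  case (Suc M)
  have "ss x (2*Suc M+1) = ss x (2*M+1) + real_of_int (tm (2*M+2)) * cc x (2*M+2)
       + real_of_int (tm (2*M+3)) * cc x (2*M+3)"
    unfolding ss_def by (simp add: numeral_eq_Suc)
  moreover have "tm (2*M+2) = tm (M+1)"
  proof -
    have "2*M+2 = 2*(M+1)" by simp
    then show ?thesis by (simp only: tm_even)
  qed
  moreover have "tm (2*M+3) = - tm (M+1)"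
  proof -
    have "2*M+3 = 2*(M+1)+1" by simp
    then show ?thesis by (simp only: tm_odd)
  qed
  ultimately show ?case using Suc by (simp add: algebra_simps)
qed


lemma lnlim:
  fixes a :: "nat \<Rightarrow> real"
  assumes "filterlim a at_top sequentially"
  shows "(\<lambda>n. ln ((a n + 1) / a n)) \<longlonglongrightarrow> 0"
proof (rule Lim_null_comparison)
  have "eventually (\<lambda>n. 0 < a n) sequentially"
    using assms unfolding filterlim_at_top_dense by blast
  then show "eventually (\<lambda>n. norm (ln ((a n + 1) / a n)) \<le> inverse (a n)) sequentially"
  proof (rule eventually_mono)
    fix n assume p: "0 < a n"
    have q: "(a n + 1) / a n > 0" using p by auto
    have "ln ((a n + 1) / a n) \<le> (a n + 1) / a n - 1" by (rule ln_le_minus_one[OF q])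
    also have "\<dots> = inverse (a n)" using p by (simp add: field_simps)
    finally have u: "ln ((a n + 1) / a n) \<le> inverse (a n)" .
    have "1 \<le> (a n + 1) / a n" using p by (simp add: field_simps)
    then have "0 \<le> ln ((a n + 1) / a n)" by simp
    then show "norm (ln ((a n + 1) / a n)) \<le> inverse (a n)" using u by simp
  qed
  show "(\<lambda>n. inverse (a n)) \<longlonglongrightarrow> 0" by (rule tendsto_inverse_0_at_top[OF assms])
qed

lemma cc_lim_gen:
  assumes k: "filterlim k at_top sequentially"
  shows "(\<lambda>m. cc x (k m)) \<longlonglongrightarrow> 0"
proof -
  have f1: "filterlim (\<lambda>m. real (k m)) at_top sequentially"
    using filterlim_compose[OF filterlim_real_sequentially k] by simp
  have f2: "filterlim (\<lambda>m. 2 * real (k m)) at_top sequentially"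
    by (rule filterlim_tendsto_pos_mult_at_top[OF tendsto_const _ f1]) simp
  have f3: "filterlim (\<lambda>m. x + 2 * real (k m)) at_top sequentially"
    by (rule filterlim_tendsto_add_at_top[OF tendsto_const f2])
  have "(\<lambda>m. ln ((x + 2 * real (k m) + 1) / (x + 2 * real (k m)))) \<longlonglongrightarrow> 0"
    by (rule lnlim[OF f3])
  then show ?thesis unfolding cc_def by (simp add: ac_simps)
qed

lemma cc_lim2: "(\<lambda>m. cc x (2*m+2)) \<longlonglongrightarrow> 0"
  by (rule cc_lim_gen, rule filterlim_subseq) (simp add: strict_mono_def)

lemma cc_lim3: "(\<lambda>m. cc x (2*m+1)) \<longlonglongrightarrow> 0"
  by (rule cc_lim_gen, rule filterlim_subseq) (simp add: strict_mono_def)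

theorem theorem3:
  fixes x :: real
  assumes "x > -2"
  shows "1 < h x \<and> h x < ((x + 3) / (x + 2))^2"
proof -
  define e where "e m = real_of_int (tm (m+1)) * (cc x (2*m+2) - cc x (2*m+3))" for m
  define f where "f m = cc x (2*m+2)" for m
  have tel: "(\<lambda>m. f m - f (Suc m)) sums (cc x 2)"
    using telescope_sums'[OF cc_lim2[of x]] by (simp add: f_def numeral_2_eq_2)
  have ebound: "\<bar>e m\<bar> \<le> f m - f (Suc m)" for m
  proof -
    have "cc x (2*m+3) \<le> cc x (2*m+2)" using cc_mono[OF assms, of "2*m+2"] by (simp add: numeral_eq_Suc)
    moreover have "cc x (2*m+4) \<le> cc x (2*m+3)" using cc_mono[OF assms, of "2*m+3"] by (simp add: numeral_eq_Suc)
    moreover have "\<bar>e m\<bar> = \<bar>cc x (2*m+2) - cc x (2*m+3)\<bar>"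
      unfolding e_def by (simp only: abs_mult tm_abs) simp
    moreover have "f m - f (Suc m) = cc x (2*m+2) - cc x (2*m+4)"
      unfolding f_def by (simp add: numeral_eq_Suc)
    ultimately show ?thesis by linarith
  qed
  have sumabs: "summable (\<lambda>m. \<bar>e m\<bar>)"
    by (rule summable_rabs_comparison_test[OF _ sums_summable[OF tel]]) (use ebound in auto)
  have esum: "summable e" using summable_rabs_cancel[OF sumabs] .
  define D where "D = suminf e"
  have Dle: "\<bar>D\<bar> \<le> cc x 2"
  proof -
    have "\<bar>D\<bar> \<le> (\<Sum>m. \<bar>e m\<bar>)" unfolding D_def by (rule summable_rabs[OF sumabs])
    also have "\<dots> \<le> (\<Sum>m. f m - f (Suc m))"
      by (rule suminf_le[OF ebound sumabs sums_summable[OF tel]])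
    also have "\<dots> = cc x 2" using tel sums_unique by metis
    finally show ?thesis .
  qed
  define L where "L = - cc x 1 + D"
  have odd_lim: "(\<lambda>M. ss x (2*M+1)) \<longlonglongrightarrow> L"
  proof -
    have "(\<lambda>M. \<Sum>m<M. e m) \<longlonglongrightarrow> D"
      using esum unfolding D_def by (simp add: summable_LIMSEQ)
    then have "(\<lambda>M. - cc x 1 + (\<Sum>m<M. e m)) \<longlonglongrightarrow> L"
      unfolding L_def by (intro tendsto_add tendsto_const)
    moreover have "(\<lambda>M. ss x (2*M+1)) = (\<lambda>M. - cc x 1 + (\<Sum>m<M. e m))"
      by (rule ext) (simp only: ss_odd e_def)
    ultimately show ?thesis by simp
  qed
  have even_lim: "(\<lambda>M. ss x (2*M)) \<longlonglongrightarrow> L"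
  proof -
    have eq: "ss x (2*M) = ss x (2*M+1) - real_of_int (tm (2*M+1)) * cc x (2*M+1)" for M
      unfolding ss_def by simp
    have z: "(\<lambda>M. real_of_int (tm (2*M+1)) * cc x (2*M+1)) \<longlonglongrightarrow> 0"
    proof (rule tendsto_rabs_zero_cancel)
      have "(\<lambda>M. \<bar>real_of_int (tm (2*M+1)) * cc x (2*M+1)\<bar>) = (\<lambda>M. \<bar>cc x (2*M+1)\<bar>)"
        by (simp add: abs_mult tm_abs)
      then show "(\<lambda>M. \<bar>real_of_int (tm (2*M+1)) * cc x (2*M+1)\<bar>) \<longlonglongrightarrow> 0"
        using tendsto_rabs_zero[OF cc_lim3[of x]] by simp
    qed
    show ?thesis unfolding eq using tendsto_diff[OF odd_lim z] by simp
  qed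
  have "ss x \<longlonglongrightarrow> L" by (rule even_odd_lim[OF even_lim odd_lim])
  then have "h_partial x \<longlonglongrightarrow> exp (- L)"
    unfolding hp_exp[OF assms] by (intro tendsto_exp tendsto_minus)
  then have hx: "h x = exp (cc x 1 - D)"
    unfolding h_def L_def by (simp add: limI)
  have c2: "cc x 2 < cc x 1" by (rule cc_strict[OF assms])
  have c2p: "cc x 2 > 0" using cc_pos[OF assms, of 2] by simp
  have c1: "exp (cc x 1) = (x+3)/(x+2)"
  proof -
    have "(x+3)/(x+2) > 0" using assms by auto
    then show ?thesis unfolding cc_def by (simp add: algebra_simps)
  qed
  have "1 < h x" unfolding hx using Dle c2 by simp
  moreover have "h x < exp (2 * cc x 1)" unfolding hx using Dle c2 by simp
  moreover have "exp (2 * cc x 1) = ((x + 3) / (x + 2))^2"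
  proof -
    have "exp (2 * cc x 1) = exp (cc x 1 + cc x 1)" by (simp only: mult_2)
    also have "\<dots> = exp (cc x 1) * exp (cc x 1)" by (rule exp_add)
    finally show ?thesis using c1 by (simp only: power2_eq_square)
  qed
  ultimately show ?thesis by simp
qed

end
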